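(* Let $\rho$ be a $(0,\infty)$-valued random variable with $\mathbb E\rho=1$, let $K\in(0,\infty)$, and $g(x)=\mathbb E\big[\frac{K\rho+x}{1+(K\rho+x)}\big]$, $x\in[0,\infty)$. Then $g$ has a unique fixed point $M\in(0,1)$, and $g$ is a strict contraction around $M$: there is $\beta\in(0,1)$ with $0\le\frac{g(x)-M}{x-M}\le\beta$ for all $x\in[0,\infty)\setminus\{M\}$ (one may take $\beta=1-g(0)/M$). *)

theory Defs
  imports "HOL-Probability.Probability"
begin

end

theory Submission
  imports Defs
begin

lemma pos_exp:
  fixes h :: "'a \<Rightarrow> real"
  assumes "prob_space M" "integrable M h" "\<forall>w\<in>space M. h w > 0"
  shows "prob_space.expectation M h > 0"
proof -
  interpret prob_space M by fact
  have "integral\<^sup>L M (\<lambda>_. 0) < integral\<^sup>L M h"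
    by (rule integral_less_AE_space) (use assms in \<open>auto intro!: AE_I2 simp: prob_space.emeasure_space_1\<close>)
  thus ?thesis by simp
qed

theorem lemma7p2:
  fixes M :: "'a measure" and \<rho> :: "'a \<Rightarrow> real" and K :: real
    and g :: "real \<Rightarrow> real"
  assumes "prob_space M"
    and "\<rho> \<in> borel_measurable M"
    and "\<forall>\<omega>\<in>space M. \<rho> \<omega> > 0"
    and "integrable M \<rho>"
    and "prob_space.expectation M \<rho> = 1"
    and "K > 0"
    and "\<And>x. g x = prob_space.expectation M (\<lambda>\<omega>. (K * \<rho> \<omega> + x) / (1 + (K * \<rho> \<omega> + x)))"
  shows "\<exists>m. 0 < m \<and> m < 1 \<and> g m = m \<and> (\<forall>y\<ge>0. g y = y \<longrightarrow> y = m)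
          \<and> (\<exists>\<beta>. 0 < \<beta> \<and> \<beta> < 1 \<and>
               (\<forall>x\<ge>0. x \<noteq> m \<longrightarrow> 0 \<le> (g x - m) / (x - m) \<and> (g x - m) / (x - m) \<le> \<beta>))
          \<and> (let \<beta> = 1 - g 0 / m in 0 < \<beta> \<and> \<beta> < 1 \<and>
               (\<forall>x\<ge>0. x \<noteq> m \<longrightarrow> 0 \<le> (g x - m) / (x - m) \<and> (g x - m) / (x - m) \<le> \<beta>))"
proof -
  interpret P: prob_space M by fact
  note rm[measurable] = assms(2)
  have rp: "\<And>w. w \<in> space M \<Longrightarrow> K * \<rho> w > 0" using assms(3,6) by simp
  define F where "F x w = (K * \<rho> w + x) / (1 + (K * \<rho> w + x))" for x w
  define D where "D x y = P.expectation (\<lambda>w. 1 / ((1 + K * \<rho> w + x) * (1 + K * \<rho> w + y)))" for x y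
  have gF: "g x = P.expectation (F x)" for x using assms(7) unfolding F_def by (simp add: F_def[abs_def])
  have intF: "integrable M (F x)" if "x \<ge> 0" for x
  proof (rule P.integrable_const_bound[where B=1])
    show "AE w in M. norm (F x w) \<le> 1"
      using rp that by (intro AE_I2) (auto simp: F_def abs_le_iff divide_le_eq_1 dest!: rp)
  qed (unfold F_def[abs_def], measurable)
  have intD: "integrable M (\<lambda>w. 1 / ((1 + K * \<rho> w + x) * (1 + K * \<rho> w + y)))"
    if "x \<ge> 0" "y \<ge> 0" for x y
  proof (rule P.integrable_const_bound[where B=1])
    show "AE w in M. norm (1 / ((1 + K * \<rho> w + x) * (1 + K * \<rho> w + y))) \<le> 1"
    proof (intro AE_I2)
      fix w assume w: "w \<in> space M"
      have "1 \<le> (1 + K * \<rho> w + x) * (1 + K * \<rho> w + y)"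
        using mult_mono[of 1 "1 + K * \<rho> w + x" 1 "1 + K * \<rho> w + y"] rp[OF w] that by simp
      thus "norm (1 / ((1 + K * \<rho> w + x) * (1 + K * \<rho> w + y))) \<le> 1"
        using rp[OF w] that by simp
    qed
  qed simp
  have Dpos: "D x y > 0" if "x \<ge> 0" "y \<ge> 0" for x y
    unfolding D_def
  proof (intro pos_exp[OF assms(1) intD[OF that]] ballI)
    fix w assume w: "w \<in> space M"
    have "1 + K * \<rho> w + x > 0" "1 + K * \<rho> w + y > 0" using rp[OF w] that by auto
    thus "0 < 1 / ((1 + K * \<rho> w + x) * (1 + K * \<rho> w + y))" by simp
  qed
  have Dle1: "D x y \<le> 1" if "x \<ge> 0" "y \<ge> 0" for x y
  proof -
    have "D x y \<le> P.expectation (\<lambda>_. 1)"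
      unfolding D_def
    proof (rule integral_mono[OF intD[OF that]])
      fix w assume w: "w \<in> space M"
      have "1 \<le> (1 + K * \<rho> w + x) * (1 + K * \<rho> w + y)"
        using mult_mono[of 1 "1 + K * \<rho> w + x" 1 "1 + K * \<rho> w + y"] rp[OF w] that by simp
      thus "1 / ((1 + K * \<rho> w + x) * (1 + K * \<rho> w + y)) \<le> 1"
        using rp[OF w] that by simp
    qed simp
    thus ?thesis by (simp add: P.prob_space)
  qed
  have Dmono: "D x y \<le> D 0 y" if "x \<ge> 0" "y \<ge> 0" for x y
    unfolding D_def
  proof (rule integral_mono[OF intD[OF that] intD])
    fix w assume w: "w \<in> space M"
    have "(1 + K * \<rho> w + 0) * (1 + K * \<rho> w + y) \<le> (1 + K * \<rho> w + x) * (1 + K * \<rho> w + y)"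
      using rp[OF w] that by (intro mult_right_mono) auto
    thus "1 / ((1 + K * \<rho> w + x) * (1 + K * \<rho> w + y)) \<le> 1 / ((1 + K * \<rho> w + 0) * (1 + K * \<rho> w + y))"
      using rp[OF w] that by (intro divide_left_mono) auto
  qed (use that in auto)
  have gdiff: "g x - g y = (x - y) * D x y" if "x \<ge> 0" "y \<ge> 0" for x y
  proof -
    have "g x - g y = P.expectation (\<lambda>w. F x w - F y w)"
      unfolding gF by (rule Bochner_Integration.integral_diff[symmetric, OF intF intF]) (use that in auto)
    also have "\<dots> = P.expectation (\<lambda>w. (x - y) * (1 / ((1 + K * \<rho> w + x) * (1 + K * \<rho> w + y))))"
    proof (rule Bochner_Integration.integral_cong[OF refl])
      fix w assume w: "w \<in> space M"
      have "1 + K * \<rho> w + x > 0" "1 + K * \<rho> w + y > 0" using rp[OF w] that by auto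
      thus "F x w - F y w = (x - y) * (1 / ((1 + K * \<rho> w + x) * (1 + K * \<rho> w + y)))"
        unfolding F_def by (simp add: field_simps)
    qed
    also have "\<dots> = (x - y) * D x y" unfolding D_def by (rule Bochner_Integration.integral_mult_right_zero)
    finally show ?thesis .
  qed
  have g0: "g 0 > 0"
    unfolding gF
  proof (intro pos_exp[OF assms(1) intF] ballI)
    fix w assume w: "w \<in> space M"
    have "K * \<rho> w > 0" using rp[OF w] .
    thus "0 < F 0 w" unfolding F_def by simp
  qed simp
  have glt1: "g x < 1" if "x \<ge> 0" for x
  proof -
    have "0 < P.expectation (\<lambda>w. 1 - F x w)"
    proof (intro pos_exp[OF assms(1)] ballI)
      show "integrable M (\<lambda>w. 1 - F x w)" using intF[OF that] by simp
      fix w assume w: "w \<in> space M"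
      have "K * \<rho> w + x > 0" using rp[OF w] that by simp
      thus "0 < 1 - F x w" unfolding F_def by (simp add: field_simps)
    qed
    also have "\<dots> = 1 - g x" unfolding gF
      by (subst Bochner_Integration.integral_diff) (auto simp: intF that P.prob_space)
    finally show ?thesis by simp
  qed
  have cont: "continuous_on {0..1} (\<lambda>x. g x - x)"
  proof (rule lipschitz_on_continuous_on)
    show "2-lipschitz_on {0..1} (\<lambda>x. g x - x)"
    proof (rule lipschitz_onI)
      fix x y :: real assume "x \<in> {0..1}" "y \<in> {0..1}"
      hence xy: "x \<ge> 0" "y \<ge> 0" by auto
      have "\<bar>g x - g y\<bar> = \<bar>x - y\<bar> * D x y" using gdiff[OF xy] Dpos[OF xy] by (simp add: abs_mult)
      also have "\<dots> \<le> \<bar>x - y\<bar>" using Dle1[OF xy] by (simp add: mult_left_le)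
      finally show "dist (g x - x) (g y - y) \<le> 2 * dist x y" unfolding dist_real_def by (simp add: abs_le_iff abs_if split: if_splits; linarith)
    qed simp
  qed
  obtain m where m: "0 \<le> m" "m \<le> 1" "g m - m = 0"
    using IVT2'[of "\<lambda>x. g x - x" 1 0 0, OF _ _ _ cont] g0 glt1[of 1] by auto
  have m0: "m > 0" using m g0 by (cases "m = 0") auto
  have gm: "g m = m" using m by simp
  have m1: "m < 1" using glt1[of m] m gm by simp
  have beta: "1 - g 0 / m = D 0 m"
    using gdiff[of 0 m] m0 gm by (simp add: field_simps)
  have ratio: "(g x - m) / (x - m) = D x m" if "x \<ge> 0" "x \<noteq> m" for x
    using gdiff[of x m] that m0 gm by (simp add: field_simps)
  have main: "0 < D 0 m \<and> D 0 m < 1 \<and>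
      (\<forall>x\<ge>0. x \<noteq> m \<longrightarrow> 0 \<le> (g x - m) / (x - m) \<and> (g x - m) / (x - m) \<le> D 0 m)"
  proof (intro conjI allI impI)
    show "0 < D 0 m" using Dpos m0 by simp
    show "D 0 m < 1" using beta[symmetric] g0 m0 by simp
  next
    fix x :: real assume "x \<ge> 0" "x \<noteq> m"
    thus "0 \<le> (g x - m) / (x - m)" "(g x - m) / (x - m) \<le> D 0 m"
      using ratio Dpos[of x m] Dmono[of x m] m0 by auto
  qed
  have uniq: "\<forall>y\<ge>0. g y = y \<longrightarrow> y = m"
  proof (intro allI impI)
    fix y :: real assume "y \<ge> 0" "g y = y"
    show "y = m"
    proof (rule ccontr)
      assume "y \<noteq> m"
      hence "(g y - m) / (y - m) = 1" using \<open>g y = y\<close> by simp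
      thus False using main \<open>y \<ge> 0\<close> \<open>y \<noteq> m\<close> by fastforce
    qed
  qed
  show ?thesis
    using m0 m1 gm uniq main beta by (intro exI[of _ m]) (auto simp: Let_def)
qed

end
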